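(* Let $\alpha\in\mathbb{R}\setminus\mathbb{Q}$ with continued fraction convergents $p_s/q_s$, let $n$ be an integer with $q_s\leq n<q_{s+1}$, and let $0\leq m\leq n$ be an integer. Then $$D_\alpha(m)\,D_\alpha(n-m)\geq 2^{-n}\,n^{-2n}\,q_{s+1}^{-n/q_s}.$$
   Context: $D_\alpha(n)=\prod_{k=1}^n\operatorname{dist}(k\alpha,\mathbb{Z})$, with $D_\alpha(0)=1$ (empty product). Continued fractions: $\alpha=[a_0;a_1,a_2,\dots]$ with integers $a_j\geq1$ for $j\geq1$; convergents $p_s/q_s=[a_0;a_1,\dots,a_s]$ with $p_s=a_sp_{s-1}+p_{s-2}$, $q_s=a_sq_{s-1}+q_{s-2}$ for $s\geq1$, $p_0=a_0$, $q_0=1$, $p_{-1}=1$, $q_{-1}=0$. *)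

theory Defs
  imports Complex_Main
begin

definition dist_int :: "real \<Rightarrow> real" where
  "dist_int x = \<bar>x - round x\<bar>"

definition D :: "real \<Rightarrow> nat \<Rightarrow> real" where
  "D \<alpha> n = (\<Prod>k=1..n. dist_int (real k * \<alpha>))"

fun cf_rem :: "real \<Rightarrow> nat \<Rightarrow> real" where
  "cf_rem \<alpha> 0 = \<alpha>"
| "cf_rem \<alpha> (Suc j) = 1 / (cf_rem \<alpha> j - of_int \<lfloor>cf_rem \<alpha> j\<rfloor>)"

definition cf_digit :: "real \<Rightarrow> nat \<Rightarrow> int" where
  "cf_digit \<alpha> j = \<lfloor>cf_rem \<alpha> j\<rfloor>"

(* cf_qq alpha s = (q_{s-1}, q_s), with q_{-1} = 0, q_0 = 1, q_s = a_s q_{s-1} + q_{s-2} *)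
fun cf_qq :: "real \<Rightarrow> nat \<Rightarrow> int \<times> int" where
  "cf_qq \<alpha> 0 = (0, 1)"
| "cf_qq \<alpha> (Suc s) = (let (a, b) = cf_qq \<alpha> s in (b, cf_digit \<alpha> (Suc s) * b + a))"

definition cf_q :: "real \<Rightarrow> nat \<Rightarrow> int" where
  "cf_q \<alpha> s = snd (cf_qq \<alpha> s)"

end

theory Submission
  imports Defs
begin


fun cf_pp :: "real \<Rightarrow> nat \<Rightarrow> int \<times> int" where
  "cf_pp \<alpha> 0 = (1, cf_digit \<alpha> 0)"
| "cf_pp \<alpha> (Suc s) = (let (a, b) = cf_pp \<alpha> s in (b, cf_digit \<alpha> (Suc s) * b + a))"

definition "QM \<alpha> t = fst (cf_qq \<alpha> t)"
definition "PM \<alpha> t = fst (cf_pp \<alpha> t)"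
definition "PP \<alpha> t = snd (cf_pp \<alpha> t)"

lemma rec_Suc:
  "cf_q \<alpha> (Suc t) = cf_digit \<alpha> (Suc t) * cf_q \<alpha> t + QM \<alpha> t"
  "QM \<alpha> (Suc t) = cf_q \<alpha> t"
  "PP \<alpha> (Suc t) = cf_digit \<alpha> (Suc t) * PP \<alpha> t + PM \<alpha> t"
  "PM \<alpha> (Suc t) = PP \<alpha> t"
  by (simp_all add: cf_q_def QM_def PP_def PM_def case_prod_beta)

lemma rec_0: "cf_q \<alpha> 0 = 1" "QM \<alpha> 0 = 0" "PP \<alpha> 0 = \<lfloor>\<alpha>\<rfloor>" "PM \<alpha> 0 = 1"
  by (simp_all add: cf_q_def QM_def PP_def PM_def cf_digit_def)

lemma rem_irrat: "\<alpha> \<notin> \<rat> \<Longrightarrow> cf_rem \<alpha> j \<notin> \<rat>"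
proof (induction j)
  case 0 thus ?case by simp
next
  case (Suc j)
  show ?case
  proof
    assume h: "cf_rem \<alpha> (Suc j) \<in> \<rat>"
    let ?x = "cf_rem \<alpha> j"
    have "?x - of_int \<lfloor>?x\<rfloor> = 1 / cf_rem \<alpha> (Suc j)" by simp
    hence "?x - of_int \<lfloor>?x\<rfloor> \<in> \<rat>" using Rats_divide[OF Rats_1 h] by simp
    hence "?x \<in> \<rat>" by (metis diff_add_cancel Rats_add Rats_of_int)
    with Suc show False by simp
  qed
qed

lemma frac_bounds: "x \<notin> \<rat> \<Longrightarrow> 0 < x - of_int \<lfloor>x\<rfloor> \<and> x - of_int \<lfloor>x\<rfloor> < 1"
proof -
  assume "x \<notin> \<rat>"
  hence "x \<noteq> of_int \<lfloor>x\<rfloor>" by (metis Rats_of_int)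
  moreover have "of_int \<lfloor>x\<rfloor> \<le> x" by (rule of_int_floor_le)
  moreover have "x < of_int \<lfloor>x\<rfloor> + 1" using floor_correct[of x] by simp
  ultimately show ?thesis by linarith
qed

lemma rem_Suc_eq: "cf_rem \<alpha> (Suc j) = 1 / (cf_rem \<alpha> j - cf_digit \<alpha> j)"
  by (simp add: cf_digit_def)

declare cf_rem.simps(2)[simp del]

lemma rem_gt1: "\<alpha> \<notin> \<rat> \<Longrightarrow> cf_rem \<alpha> (Suc j) > 1"
  using frac_bounds[OF rem_irrat[of \<alpha> j]] by (simp add: rem_Suc_eq cf_digit_def)

lemma digit_ge1: "\<alpha> \<notin> \<rat> \<Longrightarrow> cf_digit \<alpha> (Suc j) \<ge> 1"
  using rem_gt1[of \<alpha> j] unfolding cf_digit_def by (simp add: le_floor_iff)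

lemma rem_lt: "cf_rem \<alpha> j < cf_digit \<alpha> j + 1"
  unfolding cf_digit_def using floor_correct by simp

lemma rem_inv: "\<alpha> \<notin> \<rat> \<Longrightarrow> cf_rem \<alpha> j - cf_digit \<alpha> j = 1 / cf_rem \<alpha> (Suc j)"
  by (simp add: rem_Suc_eq)

lemma rem_nz: "\<alpha> \<notin> \<rat> \<Longrightarrow> cf_rem \<alpha> j - cf_digit \<alpha> j \<noteq> 0"
  unfolding cf_digit_def using frac_bounds[OF rem_irrat[of \<alpha> j]] by simp

definition "E \<alpha> t = real_of_int (cf_q \<alpha> t) * \<alpha> - of_int (PP \<alpha> t)"
definition "EM \<alpha> t = real_of_int (QM \<alpha> t) * \<alpha> - of_int (PM \<alpha> t)"

lemma EM_Suc: "EM \<alpha> (Suc t) = E \<alpha> t"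
  by (simp add: E_def EM_def rec_Suc)

lemma E_Suc: "E \<alpha> (Suc t) = cf_digit \<alpha> (Suc t) * E \<alpha> t + EM \<alpha> t"
  by (simp add: E_def EM_def rec_Suc algebra_simps)

lemma E1: "\<alpha> \<notin> \<rat> \<Longrightarrow> E \<alpha> t * cf_rem \<alpha> (Suc t) = - EM \<alpha> t"
proof (induction t)
  case 0
  have "\<alpha> - \<lfloor>\<alpha>\<rfloor> \<noteq> 0" using rem_nz[OF 0, of 0] by (simp add: cf_digit_def)
  then show ?case by (simp add: E_def EM_def rec_0 rem_Suc_eq cf_digit_def)
next
  case (Suc t)
  let ?x = "cf_rem \<alpha> (Suc t)" and ?a = "real_of_int (cf_digit \<alpha> (Suc t))"
  have nz: "?x - ?a \<noteq> 0" using rem_nz[OF Suc.prems] by blast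
  have r: "cf_rem \<alpha> (Suc (Suc t)) = 1 / (?x - ?a)" by (simp add: rem_Suc_eq)
  have eq: "E \<alpha> (Suc t) = - (?x - ?a) * E \<alpha> t"
    using E_Suc[of \<alpha> t] Suc.IH[OF Suc.prems] by (simp add: algebra_simps)
  have "E \<alpha> (Suc t) * cf_rem \<alpha> (Suc (Suc t)) = - E \<alpha> t * ((?x - ?a) * (1 / (?x - ?a)))"
    by (simp only: r eq) (simp only: mult_ac minus_mult_left)
  then show ?case using nz by (simp add: EM_Suc)
qed

lemma Q_pos: "\<alpha> \<notin> \<rat> \<Longrightarrow> cf_q \<alpha> t \<ge> 1 \<and> QM \<alpha> t \<ge> 0"
proof (induction t)
  case 0 thus ?case by (simp add: rec_0)
next
  case (Suc t)
  have "cf_digit \<alpha> (Suc t) * cf_q \<alpha> t \<ge> 1 * 1"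
    using digit_ge1[OF Suc.prems, of t] Suc.IH[OF Suc.prems] by (intro mult_mono) auto
  thus ?case using Suc by (simp add: rec_Suc)
qed

lemma Q_mono: "\<alpha> \<notin> \<rat> \<Longrightarrow> cf_q \<alpha> t \<le> cf_q \<alpha> (Suc t)"
proof -
  assume a: "\<alpha> \<notin> \<rat>"
  have "cf_digit \<alpha> (Suc t) * cf_q \<alpha> t \<ge> 1 * cf_q \<alpha> t"
    using digit_ge1[OF a, of t] Q_pos[OF a, of t] by (intro mult_right_mono) auto
  thus ?thesis using Q_pos[OF a, of t] unfolding rec_Suc by linarith
qed

lemma E2: "\<alpha> \<notin> \<rat> \<Longrightarrow> \<bar>E \<alpha> t\<bar> * (cf_q \<alpha> t * cf_rem \<alpha> (Suc t) + QM \<alpha> t) = 1"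
proof (induction t)
  case 0
  have nz: "\<alpha> - \<lfloor>\<alpha>\<rfloor> \<noteq> 0" using rem_nz[OF 0, of 0] by (simp add: cf_digit_def)
  have "\<alpha> - \<lfloor>\<alpha>\<rfloor> \<ge> 0" by simp
  then show ?case using nz by (simp add: E_def rec_0 rem_Suc_eq cf_digit_def)
next
  case (Suc t)
  let ?x = "cf_rem \<alpha> (Suc t)" and ?y = "cf_rem \<alpha> (Suc (Suc t))"
    and ?a = "real_of_int (cf_digit \<alpha> (Suc t))"
  have ypos: "?y > 0" using rem_gt1[OF Suc.prems, of "Suc t"] by simp
  have xa: "?x = ?a + 1 / ?y" using rem_inv[OF Suc.prems, of "Suc t"] by simp
  have e: "\<bar>E \<alpha> (Suc t)\<bar> * ?y = \<bar>E \<alpha> t\<bar>"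
  proof -
    have "\<bar>E \<alpha> (Suc t) * ?y\<bar> = \<bar>E \<alpha> t\<bar>" using E1[OF Suc.prems, of "Suc t"] by (simp add: EM_Suc)
    thus ?thesis using ypos by (simp add: abs_mult)
  qed
  have q: "cf_q \<alpha> (Suc t) * ?y + QM \<alpha> (Suc t) = ?y * (cf_q \<alpha> t * ?x + QM \<alpha> t)"
    using ypos by (simp add: xa rec_Suc algebra_simps)
  show ?case using Suc.IH[OF Suc.prems] e q by (metis mult.assoc)
qed

lemma det: "cf_q \<alpha> t * PM \<alpha> t - PP \<alpha> t * QM \<alpha> t = (-1)^t"
  by (induction t) (simp_all add: rec_Suc rec_0 algebra_simps)



lemma E_ne: "\<alpha> \<notin> \<rat> \<Longrightarrow> E \<alpha> t \<noteq> 0"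
  using E2[of \<alpha> t] by auto

lemma E_lower: "\<alpha> \<notin> \<rat> \<Longrightarrow> \<bar>E \<alpha> t\<bar> \<ge> 1 / (2 * cf_q \<alpha> (Suc t))"
proof -
  assume a: "\<alpha> \<notin> \<rat>"
  let ?y = "cf_q \<alpha> t * cf_rem \<alpha> (Suc t) + QM \<alpha> t"
  have qp: "real_of_int (cf_q \<alpha> t) \<ge> 1" "real_of_int (QM \<alpha> t) \<ge> 0" using Q_pos[OF a, of t] by auto
  have xl: "cf_rem \<alpha> (Suc t) < cf_digit \<alpha> (Suc t) + 1" using rem_lt[of \<alpha> "Suc t"] by simp
  have xp: "cf_rem \<alpha> (Suc t) > 0" using rem_gt1[OF a, of t] by simp
  have "real_of_int (cf_q \<alpha> t) * cf_rem \<alpha> (Suc t) > 0" using qp xp by (simp add: mult_pos_pos)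
  hence ypos: "?y > 0" using qp by linarith
  have "?y \<le> real_of_int (cf_q \<alpha> t) * (real_of_int (cf_digit \<alpha> (Suc t)) + 1) + real_of_int (QM \<alpha> t)"
    using xl qp by (intro add_right_mono mult_left_mono) auto
  also have "\<dots> = cf_q \<alpha> (Suc t) + cf_q \<alpha> t" by (simp add: rec_Suc algebra_simps)
  also have "\<dots> \<le> 2 * cf_q \<alpha> (Suc t)" using Q_mono[OF a, of t] by simp
  finally have yle: "?y \<le> 2 * cf_q \<alpha> (Suc t)" .
  have "\<bar>E \<alpha> t\<bar> = 1 / ?y" using E2[OF a, of t] ypos by (simp add: field_simps)
  also have "\<dots> \<ge> 1 / (2 * cf_q \<alpha> (Suc t))" using yle ypos by (intro divide_left_mono) auto
  finally show ?thesis .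
qed

lemma abs_add_same_sign: "(x::real) * y \<ge> 0 \<Longrightarrow> \<bar>x + y\<bar> = \<bar>x\<bar> + \<bar>y\<bar>"
  by (auto simp: zero_le_mult_iff abs_if)

lemma best_approx:
  assumes a: "\<alpha> \<notin> \<rat>" and k: "0 < k" "k < cf_q \<alpha> (Suc t)"
  shows "\<bar>of_int k * \<alpha> - of_int j\<bar> \<ge> \<bar>E \<alpha> t\<bar>"
proof -
  define Q0 where "Q0 = cf_q \<alpha> t"
  define Q1 where "Q1 = cf_q \<alpha> (Suc t)"
  define P0 where "P0 = PP \<alpha> t"
  define P1 where "P1 = PP \<alpha> (Suc t)"
  define d where "d = Q0 * P1 - Q1 * P0"
  have dd: "d * d = 1"
  proof -
    have "cf_q \<alpha> (Suc t) * PM \<alpha> (Suc t) - PP \<alpha> (Suc t) * QM \<alpha> (Suc t) = (-1)^Suc t" by (rule det)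
    hence "d = - ((-1)^Suc t)" by (simp add: d_def Q0_def Q1_def P0_def P1_def rec_Suc(2,4) algebra_simps)
    thus ?thesis by (simp flip: power_add)
  qed
  define u where "u = d * (k * P1 - j * Q1)"
  define v where "v = d * (Q0 * j - P0 * k)"
  have ku: "k = u * Q0 + v * Q1"
  proof -
    have "u * Q0 + v * Q1 = (d * d) * k" by (simp add: u_def v_def d_def algebra_simps)
    thus ?thesis using dd by simp
  qed
  have ju: "j = u * P0 + v * P1"
  proof -
    have "u * P0 + v * P1 = (d * d) * j" by (simp add: u_def v_def d_def algebra_simps)
    thus ?thesis using dd by simp
  qed
  have eq: "of_int k * \<alpha> - of_int j = of_int u * E \<alpha> t + of_int v * E \<alpha> (Suc t)"
  proof -
    have "of_int k * \<alpha> - of_int j = (of_int (u * Q0 + v * Q1) * \<alpha> - of_int (u * P0 + v * P1) :: real)"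
      using ku ju by simp
    thus ?thesis by (simp add: E_def Q0_def Q1_def P0_def P1_def algebra_simps)
  qed
  have Q0p: "Q0 \<ge> 1" "Q1 \<ge> 1" using Q_pos[OF a] by (auto simp: Q0_def Q1_def)
  have sgn: "E \<alpha> t * E \<alpha> (Suc t) < 0"
  proof -
    have "E \<alpha> (Suc t) * cf_rem \<alpha> (Suc (Suc t)) = - E \<alpha> t" using E1[OF a, of "Suc t"] by (simp add: EM_Suc)
    hence "E \<alpha> t = - (E \<alpha> (Suc t) * cf_rem \<alpha> (Suc (Suc t)))" by simp
    hence "E \<alpha> t * E \<alpha> (Suc t) = - (E \<alpha> (Suc t) * E \<alpha> (Suc t)) * cf_rem \<alpha> (Suc (Suc t))"
      by (simp add: algebra_simps)
    moreover have "E \<alpha> (Suc t) * E \<alpha> (Suc t) > 0" using E_ne[OF a, of "Suc t"] by (auto simp: zero_less_mult_iff linorder_neq_iff)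
    moreover have "cf_rem \<alpha> (Suc (Suc t)) > 0" using rem_gt1[OF a, of "Suc t"] by simp
    ultimately show ?thesis by (simp add: mult_pos_pos)
  qed
  show ?thesis
  proof (cases "v = 0")
    case True
    hence "u \<noteq> 0" using ku k by auto
    hence "\<bar>of_int u :: real\<bar> \<ge> 1" by linarith
    hence "\<bar>of_int u * E \<alpha> t\<bar> \<ge> 1 * \<bar>E \<alpha> t\<bar>" unfolding abs_mult by (intro mult_right_mono) auto
    thus ?thesis using eq True by simp
  next
    case False
    have "u * v < 0"
    proof (rule ccontr)
      assume "\<not> u * v < 0"
      hence "u * v \<ge> 0" by simp
      show False
      proof (cases "v > 0")
        case True
        hence "u \<ge> 0" using \<open>u * v \<ge> 0\<close> by (simp add: zero_le_mult_iff)
        hence "u * Q0 \<ge> 0" "v * Q1 \<ge> Q1" using True Q0p by auto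
        thus False using ku k unfolding Q1_def by linarith
      next
        case F: False
        hence "v < 0" using False by simp
        hence "u \<le> 0" using \<open>u * v \<ge> 0\<close> by (simp add: zero_le_mult_iff)
        hence "u * Q0 \<le> 0" "v * Q1 < 0" using \<open>v < 0\<close> Q0p by (auto simp: mult_nonpos_nonneg mult_neg_pos)
        thus False using ku k unfolding Q1_def by linarith
      qed
    qed
    hence uv: "of_int u * of_int v < (0::real)" by (metis of_int_0 of_int_less_iff of_int_mult)
    have "(of_int u * E \<alpha> t) * (of_int v * E \<alpha> (Suc t)) = (of_int u * of_int v) * (E \<alpha> t * E \<alpha> (Suc t))"
      by (simp add: algebra_simps)
    also have "\<dots> > 0" using uv sgn by (simp add: mult_neg_neg)
    finally have "\<bar>of_int k * \<alpha> - of_int j\<bar> = \<bar>of_int u * E \<alpha> t\<bar> + \<bar>of_int v * E \<alpha> (Suc t)\<bar>"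
      unfolding eq by (intro abs_add_same_sign) simp
    moreover have "u \<noteq> 0" using \<open>u * v < 0\<close> by auto
    hence "\<bar>of_int u :: real\<bar> \<ge> 1" by linarith
    hence "\<bar>of_int u * E \<alpha> t\<bar> \<ge> 1 * \<bar>E \<alpha> t\<bar>" unfolding abs_mult by (intro mult_right_mono) auto
    ultimately show ?thesis by simp
  qed
qed

lemma fact_F:
  assumes a: "\<alpha> \<notin> \<rat>" and k: "1 \<le> k" "int k < cf_q \<alpha> t"
  shows "\<bar>real k * \<alpha> - of_int j\<bar> \<ge> 1 / (2 * cf_q \<alpha> t)"
proof (cases t)
  case 0 thus ?thesis using k by (simp add: rec_0)
next
  case (Suc t')
  have "\<bar>of_int (int k) * \<alpha> - of_int j\<bar> \<ge> \<bar>E \<alpha> t'\<bar>"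
    using best_approx[OF a, of "int k" t' j] k Suc by simp
  moreover have "\<bar>E \<alpha> t'\<bar> \<ge> 1 / (2 * cf_q \<alpha> t)" using E_lower[OF a, of t'] Suc by simp
  ultimately show ?thesis by simp
qed



lemma count_S:
  fixes q m :: nat
  assumes q1: "q \<ge> 1"
    and H: "\<And>k j. 1 \<le> k \<Longrightarrow> k < q \<Longrightarrow> \<bar>real k * \<alpha> - of_int j\<bar> \<ge> 1 / (2 * real q)"
  shows "card {k\<in>{1..m}. dist_int (real k * \<alpha>) < 1 / (4 * real q)} \<le> m div q"
proof -
  let ?S = "{k\<in>{1..m}. dist_int (real k * \<alpha>) < 1 / (4 * real q)}"
  have qp: "real q > 0" using q1 by simp
  have ge: "k \<ge> q" if "k \<in> ?S" for k
  proof (rule ccontr)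
    assume "\<not> q \<le> k"
    hence "\<bar>real k * \<alpha> - of_int (round (real k * \<alpha>))\<bar> \<ge> 1 / (2 * real q)" using that by (intro H) auto
    moreover have "1 / (4 * real q) < 1 / (2 * real q)" using qp by (simp add: divide_strict_left_mono)
    ultimately show False using that unfolding dist_int_def by simp
  qed
  have inj: "inj_on (\<lambda>k. k div q) ?S"
  proof (rule inj_onI, rule ccontr)
    fix j k assume jS: "j \<in> ?S" and kS: "k \<in> ?S" and e: "j div q = k div q" and ne: "j \<noteq> k"
    have main: "False" if jS: "j \<in> ?S" and kS: "k \<in> ?S" and e: "j div q = k div q" and lt: "j < k" for j k
    proof -
      have "k - j < q"
      proof -
        have "k = q * (k div q) + k mod q" "j = q * (j div q) + j mod q" by simp_all
        moreover have "k mod q < q" using q1 by simp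
        moreover have "q * (j div q) = q * (k div q)" using e by simp
        ultimately show ?thesis using e lt by linarith
      qed
      hence "\<bar>real (k - j) * \<alpha> - of_int (round (real k * \<alpha>) - round (real j * \<alpha>))\<bar> \<ge> 1 / (2 * real q)"
        using lt by (intro H) auto
      moreover have "real (k - j) * \<alpha> - of_int (round (real k * \<alpha>) - round (real j * \<alpha>))
          = (real k * \<alpha> - of_int (round (real k * \<alpha>))) - (real j * \<alpha> - of_int (round (real j * \<alpha>)))"
        using lt by (simp add: of_nat_diff algebra_simps)
      moreover have "dist_int (real k * \<alpha>) + dist_int (real j * \<alpha>) < 1 / (2 * real q)"
        using jS kS by simp
      ultimately show False unfolding dist_int_def by linarith
    qed
    show False
    proof (cases "j < k")
      case True thus ?thesis using main[OF jS kS e] by blast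
    next
      case False thus ?thesis using main[OF kS jS e[symmetric]] ne by simp
    qed
  qed
  have img: "(\<lambda>k. k div q) ` ?S \<subseteq> {1..m div q}"
  proof
    fix x assume "x \<in> (\<lambda>k. k div q) ` ?S"
    then obtain k where kS: "k \<in> ?S" and x: "x = k div q" by auto
    have "k \<ge> q" using ge[OF kS] .
    hence "x \<ge> 1" using q1 x div_greater_zero_iff[of k q] by simp
    moreover have "x \<le> m div q" using kS x by (simp add: div_le_mono)
    ultimately show "x \<in> {1..m div q}" by simp
  qed
  have "card ?S \<le> card {1..m div q}" using card_inj_on_le[OF inj img] by simp
  thus ?thesis by simp
qed

lemma prod_lower:
  fixes f :: "nat \<Rightarrow> real"
  assumes "finite A" "S \<subseteq> A" "\<And>k. k \<in> S \<Longrightarrow> a \<le> f k" "\<And>k. k \<in> A - S \<Longrightarrow> b \<le> f k" "0 \<le> a" "0 \<le> b"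
  shows "a ^ card S * b ^ (card A - card S) \<le> prod f A"
proof -
  have fS: "finite S" using assms(1,2) finite_subset by blast
  have "prod f A = prod f S * prod f (A - S)" using prod.subset_diff[OF assms(2,1)] by (simp add: mult.commute)
  moreover have "a ^ card S \<le> prod f S"
    using prod_mono[of S "\<lambda>_. a" f] assms(3,5) by simp
  moreover have "b ^ card (A - S) \<le> prod f (A - S)"
    using prod_mono[of "A - S" "\<lambda>_. b" f] assms(4,6) by simp
  moreover have "card (A - S) = card A - card S" using card_Diff_subset[OF fS assms(2)] .
  moreover have "0 \<le> a ^ card S" "0 \<le> b ^ (card A - card S)" using assms(5,6) by simp_all
  ultimately show ?thesis
  proof -
    assume e: "prod f A = prod f S * prod f (A - S)" and h1: "a ^ card S \<le> prod f S"
      and h2: "b ^ card (A - S) \<le> prod f (A - S)" and cd: "card (A - S) = card A - card S"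
      and p1: "0 \<le> a ^ card S" and p2: "0 \<le> b ^ (card A - card S)"
    have "a ^ card S * b ^ (card A - card S) \<le> prod f S * b ^ (card A - card S)"
      using h1 p2 by (rule mult_right_mono)
    also have "\<dots> \<le> prod f S * prod f (A - S)"
      using h2 cd p1 h1 by (intro mult_left_mono) auto
    finally show ?thesis using e by simp
  qed
qed

lemma nat_ineq:
  fixes n c :: nat
  assumes "n \<ge> 2" "c \<le> n"
  shows "2 ^ c * 4 ^ (n - c) * n ^ (n - c) \<le> 2 ^ n * n ^ (2 * n)"
proof -
  have f: "(4::nat) ^ (n - c) = 2 ^ (n - c) * 2 ^ (n - c)"
    using power_mult_distrib[of "2::nat" 2 "n - c"] by simp
  have g: "(2::nat) ^ c * 2 ^ (n - c) = 2 ^ n"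
    using assms(2) by (simp flip: power_add)
  have h1: "(2::nat) ^ (n - c) \<le> n ^ (n - c)" using assms(1) by (intro power_mono) auto
  have h2: "n ^ (n - c) \<le> n ^ n" using assms(1) by (intro power_increasing) auto
  have "2 ^ c * 4 ^ (n - c) * n ^ (n - c) = 2 ^ n * (2 ^ (n - c) * n ^ (n - c))"
    using f g by (simp add: mult.assoc mult.left_commute)
  also have "\<dots> \<le> 2 ^ n * (n ^ n * n ^ n)"
    using h1 h2 order_trans by (intro mult_le_mono2 mult_le_mono) blast+
  also have "\<dots> = 2 ^ n * n ^ (2 * n)" by (simp add: mult_2 power_add)
  finally show ?thesis .
qed



lemma final_ineq:
  fixes n c :: nat and q Q :: real
  assumes n2: "n \<ge> 2" and cn: "c \<le> n" and cq: "real c \<le> real n / q" and q1: "q \<ge> 1" and Q1: "Q \<ge> 1"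
  shows "2 powr (- real n) * real n powr (- 2 * real n) * Q powr (- real n / q)
         \<le> (1 / (2 * Q)) ^ c * (1 / (4 * real n)) ^ (n - c)"
proof -
  have h1: "Q powr (- real n / q) \<le> Q powr (- real c)"
    using cq Q1 by (intro powr_mono) auto
  have h2: "Q powr (- real c) = 1 / Q ^ c" using Q1 by (simp add: powr_minus powr_realpow divide_inverse)
  have h3: "2 powr (- real n) = 1 / 2 ^ n" by (simp add: powr_minus powr_realpow divide_inverse)
  have h4: "real n powr (- 2 * real n) = 1 / real n ^ (2 * n)"
  proof -
    have "real n powr (real (2 * n)) = real n ^ (2 * n)" using n2 by (intro powr_realpow) simp
    moreover have "- 2 * real n = - real (2 * n)" by simp
    ultimately show ?thesis by (simp only: powr_minus divide_inverse)
  qed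
  have Qp: "Q ^ c > 0" using Q1 by simp
  have "real (2 ^ c * 4 ^ (n - c) * n ^ (n - c)) \<le> real (2 ^ n * n ^ (2 * n))"
    using nat_ineq[OF n2 cn] by linarith
  hence ni: "2 ^ c * 4 ^ (n - c) * real n ^ (n - c) \<le> 2 ^ n * real n ^ (2 * n)" by simp
  have pos: "0 < 2 ^ c * 4 ^ (n - c) * real n ^ (n - c) * Q ^ c" using n2 Qp by simp
  have "2 powr (- real n) * real n powr (- 2 * real n) * Q powr (- real n / q)
        \<le> 1 / 2 ^ n * (1 / real n ^ (2 * n)) * (1 / Q ^ c)"
    using h1 unfolding h2 h3 h4 by (intro mult_left_mono) auto
  also have "\<dots> = 1 / (2 ^ n * real n ^ (2 * n) * Q ^ c)" by simp
  also have "\<dots> \<le> 1 / (2 ^ c * 4 ^ (n - c) * real n ^ (n - c) * Q ^ c)"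
    using pos ni Qp n2 by (intro divide_left_mono mult_right_mono) (auto intro!: mult_pos_pos)
  also have "\<dots> = (1 / (2 * Q)) ^ c * (1 / (4 * real n)) ^ (n - c)"
    by (simp add: power_mult_distrib power_divide)
  finally show ?thesis .
qed



theorem lemma3:
  fixes \<alpha> :: real and s n m :: nat
  assumes "\<alpha> \<notin> \<rat>"
    and "cf_q \<alpha> s \<le> int n" and "int n < cf_q \<alpha> (Suc s)"
    and "m \<le> n"
  shows "D \<alpha> m * D \<alpha> (n - m) \<ge>
    2 powr (- real n) * real n powr (- 2 * real n) *
    real_of_int (cf_q \<alpha> (Suc s)) powr (- real n / real_of_int (cf_q \<alpha> s))"
proof -
  note a = assms(1)
  define Q where "Q = real_of_int (cf_q \<alpha> (Suc s))"
  define qn where "qn = nat (cf_q \<alpha> s)"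
  have q1: "cf_q \<alpha> s \<ge> 1" using Q_pos[OF a] by blast
  have qn: "real qn = real_of_int (cf_q \<alpha> s)" "qn \<ge> 1" "qn \<le> n"
    using q1 assms(2) by (auto simp: qn_def)
  have Qn: "Q > real n" using assms(3) by (simp add: Q_def)
  have n1: "n \<ge> 1" using qn by simp
  have Q1: "Q \<ge> 1" using Qn n1 by simp
  have Fbig: "1 / (2 * Q) \<le> \<bar>real k * \<alpha> - of_int j\<bar>" if "1 \<le> k" "k \<le> n" for k j
    using fact_F[OF a, of k "Suc s" j] that assms(3) by (simp add: Q_def)
  have Fsmall: "1 / (2 * real qn) \<le> \<bar>real k * \<alpha> - of_int j\<bar>" if "1 \<le> k" "k < qn" for k j
    using fact_F[OF a, of k s j] that qn by simp
  have Dbig: "1 / (2 * Q) \<le> dist_int (real k * \<alpha>)" if "1 \<le> k" "k \<le> n" for k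
    unfolding dist_int_def using Fbig[OF that] by blast
  show ?thesis
  proof (cases "n = 1")
    case True
    hence qq: "real_of_int (cf_q \<alpha> s) = 1" using qn by simp
    have "D \<alpha> m * D \<alpha> (n - m) = dist_int \<alpha>"
      using True assms(4) by (cases m) (auto simp: D_def)
    moreover have "dist_int \<alpha> \<ge> 1 / (2 * Q)" using Dbig[of 1] True by simp
    moreover have "2 powr (- real n) * real n powr (- 2 * real n) * Q powr (- real n / 1) = 1 / (2 * Q)"
      using True Q1 by (simp add: powr_minus powr_minus_divide inverse_eq_divide)
    ultimately show ?thesis using qq by (simp add: Q_def)
  next
    case False
    hence n2: "n \<ge> 2" using n1 by simp
    define S where "S m' = {k\<in>{1..m'}. dist_int (real k * \<alpha>) < 1 / (4 * real qn)}" for m'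
    have cS: "card (S m') \<le> m' div qn" for m'
      unfolding S_def using count_S[OF qn(2), of \<alpha> m'] Fsmall by blast
    have Db: "(1 / (2 * Q)) ^ card (S m') * (1 / (4 * real n)) ^ (m' - card (S m')) \<le> D \<alpha> m'"
      if "m' \<le> n" for m'
    proof -
      have "(1 / (2 * Q)) ^ card (S m') * (1 / (4 * real n)) ^ (card {1..m'} - card (S m'))
            \<le> prod (\<lambda>k. dist_int (real k * \<alpha>)) {1..m'}"
      proof (rule prod_lower)
        show "S m' \<subseteq> {1..m'}" by (auto simp: S_def)
        show "1 / (2 * Q) \<le> dist_int (real k * \<alpha>)" if "k \<in> S m'" for k
          using that \<open>m' \<le> n\<close> by (intro Dbig) (auto simp: S_def)
        show "1 / (4 * real n) \<le> dist_int (real k * \<alpha>)" if "k \<in> {1..m'} - S m'" for k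
        proof -
          have "1 / (4 * real n) \<le> 1 / (4 * real qn)" using qn by (intro divide_left_mono) auto
          thus ?thesis using that by (auto simp: S_def)
        qed
        show "0 \<le> 1 / (2 * Q)" using Q1 by simp
        show "0 \<le> 1 / (4 * real n)" by simp
      qed simp
      thus ?thesis by (simp add: D_def)
    qed
    define c1 where "c1 = card (S m)"
    define c2 where "c2 = card (S (n - m))"
    have c1: "c1 \<le> m div qn" and c2: "c2 \<le> (n - m) div qn" using cS by (simp_all add: c1_def c2_def)
    have c1m: "c1 \<le> m" and c2m: "c2 \<le> n - m" using c1 c2 div_le_dividend order_trans by blast+
    have cn: "c1 + c2 \<le> n" using c1m c2m assms(4) by linarith
    have cq: "real (c1 + c2) \<le> real n / real qn"
    proof -
      have "(c1 + c2) * qn \<le> (m div qn) * qn + ((n - m) div qn) * qn"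
        unfolding add_mult_distrib using c1 c2 by (intro add_mono mult_le_mono1)
      also have "\<dots> \<le> m + (n - m)" by (intro add_mono) (simp_all add: div_times_less_eq_dividend)
      also have "\<dots> = n" using assms(4) by simp
      finally have "real (c1 + c2) * real qn \<le> real n" by (metis of_nat_le_iff of_nat_mult)
      thus ?thesis using qn by (simp add: field_simps)
    qed
    let ?a = "1 / (2 * Q)" and ?b = "1 / (4 * real n)"
    have "?a ^ (c1 + c2) * ?b ^ (n - (c1 + c2)) = (?a ^ c1 * ?b ^ (m - c1)) * (?a ^ c2 * ?b ^ (n - m - c2))"
    proof -
      have "n - (c1 + c2) = (m - c1) + (n - m - c2)" using c1m c2m assms(4) by linarith
      thus ?thesis by (simp add: power_add algebra_simps)
    qed
    also have "\<dots> \<le> D \<alpha> m * D \<alpha> (n - m)"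
    proof (rule mult_mono)
      show "?a ^ c1 * ?b ^ (m - c1) \<le> D \<alpha> m" using Db[OF assms(4)] by (simp add: c1_def)
      show "?a ^ c2 * ?b ^ (n - m - c2) \<le> D \<alpha> (n - m)" using Db[of "n - m"] by (simp add: c2_def)
      show "0 \<le> D \<alpha> m" unfolding D_def dist_int_def by (intro prod_nonneg) auto
      show "0 \<le> ?a ^ c2 * ?b ^ (n - m - c2)" using Q1 by simp
    qed
    finally have "?a ^ (c1 + c2) * ?b ^ (n - (c1 + c2)) \<le> D \<alpha> m * D \<alpha> (n - m)" .
    moreover have "2 powr (- real n) * real n powr (- 2 * real n) * Q powr (- real n / real qn)
         \<le> ?a ^ (c1 + c2) * ?b ^ (n - (c1 + c2))"
      using final_ineq[OF n2 cn cq _ Q1] qn by simp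
    ultimately show ?thesis using qn by (simp add: Q_def)
  qed
qed


end
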